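(* Let $X$ be a subspace of $\beta\omega$ with $\omega\subseteq X$. If $\operatorname{CL}(X)$ is pseudocompact, then for every cardinal $\kappa<\mathfrak h$, $\omega^\kappa$ is relatively countably compact in $X^\kappa$; consequently $X$ is $(\kappa,\omega^* )$-pseudocompact.
   Context: $\beta\omega$ is the Stone–Čech compactification of the discrete space $\omega$, $\omega^*$ its set of free ultrafilters. $\mathfrak h$ is the least cardinality of a family of open dense subsets of $([\omega]^\omega,\subseteq^* )$ with empty intersection (a family $\mathcal D\subseteq[\omega]^\omega$ is open dense if every $A\in[\omega]^\omega$ contains some $B\in\mathcal D$, and $\mathcal D$ is closed under infinite $\subseteq^*$-subsets). A subset $Y$ of $Z$ is relatively countably compact in $Z$ if every countably infinite subset of $Y$ has an accumulation point in $Z$. For $p\in\omega^*$ and sets $B_n\subseteq X$, $x$ is a $p$-limit of $(B_n)$ if $\{n:V\cap B_n\ne\emptyset\}\in p$ for each neighborhood $V$ of $x$; $X$ is $(\kappa,\omega^* )$-pseudocompact if for every family of $\kappa$ sequences of nonempty open subsets of $X$ there is a single $p\in\omega^*$ such that each sequence has a $p$-limit point in $X$. $\operatorname{CL}(X)$ is the set of nonempty closed subsets of $X$ with the Vietoris topology; pseudocompact means every continuous real-valued function is bounded. *)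

theory Defs
  imports "HOL-Analysis.Analysis"
begin

text \<open>Points of beta-omega are ultrafilters on nat, represented as sets of subsets of nat.\<close>

definition is_ultrafilter :: "nat set set \<Rightarrow> bool" where
  "is_ultrafilter U \<longleftrightarrow>
     UNIV \<in> U \<and> {} \<notin> U \<and>
     (\<forall>A B. A \<in> U \<and> A \<subseteq> B \<longrightarrow> B \<in> U) \<and>
     (\<forall>A B. A \<in> U \<and> B \<in> U \<longrightarrow> A \<inter> B \<in> U) \<and>
     (\<forall>A. A \<in> U \<or> - A \<in> U)"

definition betaw :: "nat set set set" where
  "betaw = {U. is_ultrafilter U}"

text \<open>The principal_uf ultrafilter at n; omega is identified with these points.\<close>
definition principal_uf :: "nat \<Rightarrow> nat set set" where
  "principal_uf n = {A. n \<in> A}"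

definition omega_star :: "nat set set set" where
  "omega_star = {U \<in> betaw. \<forall>n. U \<noteq> principal_uf n}"

definition betaw_top :: "nat set set topology" where
  "betaw_top = topology_generated_by {{U \<in> betaw. A \<in> U} | A. True}"

definition CL :: "'a topology \<Rightarrow> 'a set set" where
  "CL T = {F. closedin T F \<and> F \<noteq> {}}"

definition vietoris :: "'a topology \<Rightarrow> 'a set topology" where
  "vietoris T = topology_generated_by
     ({{F \<in> CL T. F \<subseteq> U} | U. openin T U} \<union> {{F \<in> CL T. F \<inter> U \<noteq> {}} | U. openin T U})"

definition pseudocompact :: "'a topology \<Rightarrow> bool" where
  "pseudocompact T \<longleftrightarrow> (\<forall>f. continuous_map T euclideanreal f \<longrightarrow> bounded (f ` topspace T))"

text \<open>Open dense subfamilies of ([omega]^omega, almost-inclusion).\<close>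
definition open_dense :: "nat set set \<Rightarrow> bool" where
  "open_dense D \<longleftrightarrow>
     (\<forall>B\<in>D. infinite B) \<and>
     (\<forall>A. infinite A \<longrightarrow> (\<exists>B\<in>D. B \<subseteq> A)) \<and>
     (\<forall>B C. B \<in> D \<and> infinite C \<and> finite (C - B) \<longrightarrow> C \<in> D)"

text \<open>|K| < h: every family of at most |K| open dense families has an infinite
  set in common (h is the least size of a family with empty intersection).\<close>
definition less_than_h :: "'k set \<Rightarrow> bool" where
  "less_than_h K \<longleftrightarrow>
     (\<forall>\<D> :: nat set set set. (card_of \<D>, card_of K) \<in> ordLeq \<and> (\<forall>D\<in>\<D>. open_dense D)
        \<longrightarrow> (\<exists>A. infinite A \<and> (\<forall>D\<in>\<D>. A \<in> D)))"

definition rel_countably_compact :: "'a topology \<Rightarrow> 'a set \<Rightarrow> bool" where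
  "rel_countably_compact T Y \<longleftrightarrow>
     Y \<subseteq> topspace T \<and>
     (\<forall>S. S \<subseteq> Y \<and> infinite S \<and> countable S \<longrightarrow> T derived_set_of S \<noteq> {})"

definition p_limit :: "'a topology \<Rightarrow> nat set set \<Rightarrow> (nat \<Rightarrow> 'a set) \<Rightarrow> 'a \<Rightarrow> bool" where
  "p_limit T p B x \<longleftrightarrow> x \<in> topspace T \<and>
     (\<forall>V. openin T V \<and> x \<in> V \<longrightarrow> {n. V \<inter> B n \<noteq> {}} \<in> p)"

definition kappa_omega_star_pseudocompact :: "'k set \<Rightarrow> 'a topology \<Rightarrow> bool" where
  "kappa_omega_star_pseudocompact K T \<longleftrightarrow>
     (\<forall>U :: 'k \<Rightarrow> nat \<Rightarrow> 'a set.
        (\<forall>k\<in>K. \<forall>n. openin T (U k n) \<and> U k n \<noteq> {}) \<longrightarrow>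
        (\<exists>p\<in>omega_star. \<forall>k\<in>K. \<exists>x. p_limit T p (U k) x))"

end

theory Submission
  imports Defs
begin



definition img :: "('a \<Rightarrow> 'b) \<Rightarrow> 'a set set \<Rightarrow> 'b set set" where
  "img g P = {C. g -` C \<in> P}"

lemma uf_UNIV: "is_ultrafilter U \<Longrightarrow> UNIV \<in> U" by (simp add: is_ultrafilter_def)
lemma uf_empty: "is_ultrafilter U \<Longrightarrow> {} \<notin> U" by (simp add: is_ultrafilter_def)
lemma uf_mono: "is_ultrafilter U \<Longrightarrow> A \<in> U \<Longrightarrow> A \<subseteq> B \<Longrightarrow> B \<in> U"
  unfolding is_ultrafilter_def by blast
lemma uf_Int: "is_ultrafilter U \<Longrightarrow> A \<in> U \<Longrightarrow> B \<in> U \<Longrightarrow> A \<inter> B \<in> U"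
  unfolding is_ultrafilter_def by blast
lemma uf_compl: "is_ultrafilter U \<Longrightarrow> A \<in> U \<or> - A \<in> U"
  unfolding is_ultrafilter_def by blast
lemma uf_not_both: "is_ultrafilter U \<Longrightarrow> A \<in> U \<Longrightarrow> - A \<in> U \<Longrightarrow> False"
  using uf_Int[of U A "-A"] uf_empty[of U] by auto
lemma uf_compl_iff: "is_ultrafilter U \<Longrightarrow> (- A \<in> U) \<longleftrightarrow> A \<notin> U"
  using uf_compl uf_not_both by blast

lemma principal_uf_uf: "is_ultrafilter (principal_uf n)"
  unfolding is_ultrafilter_def principal_uf_def by auto

lemma principal_betaw: "principal_uf n \<in> betaw"
  by (simp add: betaw_def principal_uf_uf)

lemma uf_singleton: assumes "is_ultrafilter U" "{a} \<in> U" shows "U = principal_uf a"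
proof (rule set_eqI)
  fix A show "A \<in> U \<longleftrightarrow> A \<in> principal_uf a"
  proof
    assume "A \<in> U"
    show "A \<in> principal_uf a"
    proof (rule ccontr)
      assume "A \<notin> principal_uf a"
      then have "A \<inter> {a} = {}" by (auto simp: principal_uf_def)
      then show False using uf_Int[OF assms(1) \<open>A \<in> U\<close> assms(2)] uf_empty[OF assms(1)] by simp
    qed
  next
    assume "A \<in> principal_uf a"
    then show "A \<in> U" using uf_mono[OF assms(1) assms(2)] by (auto simp: principal_uf_def)
  qed
qed

lemma uf_finite: assumes "is_ultrafilter U" "finite E" "E \<in> U" shows "\<exists>a\<in>E. U = principal_uf a"
  using assms(2,3)
proof (induction E rule: finite_induct)
  case empty then show ?case using uf_empty[OF assms(1)] by simp
next
  case (insert a E)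
  show ?case
  proof (cases "{a} \<in> U")
    case True then show ?thesis using uf_singleton[OF assms(1)] by blast
  next
    case False
    then have "- {a} \<in> U" using uf_compl[OF assms(1)] by blast
    then have "insert a E \<inter> - {a} \<in> U" using uf_Int[OF assms(1) insert.prems] by blast
    then have "E \<in> U" using uf_mono[OF assms(1)] by blast
    then show ?thesis using insert.IH by blast
  qed
qed

definition free_uf :: "nat set set \<Rightarrow> bool" where
  "free_uf U \<longleftrightarrow> is_ultrafilter U \<and> (\<forall>n. U \<noteq> principal_uf n)"

lemma free_finite: "free_uf U \<Longrightarrow> finite E \<Longrightarrow> E \<notin> U"
  using uf_finite unfolding free_uf_def by blast

lemma free_cofinite: "free_uf U \<Longrightarrow> finite E \<Longrightarrow> - E \<in> U"
  using free_finite uf_compl unfolding free_uf_def by blast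

lemma free_infinite: "free_uf U \<Longrightarrow> A \<in> U \<Longrightarrow> infinite A"
  using free_finite by blast

lemma img_uf: assumes P: "is_ultrafilter P" shows "is_ultrafilter (img g P)"
proof -
  have 1: "UNIV \<in> img g P" using uf_UNIV[OF P] by (simp add: img_def)
  have 2: "{} \<notin> img g P" using uf_empty[OF P] by (simp add: img_def)
  have 3: "B \<in> img g P" if "A \<in> img g P" "A \<subseteq> B" for A B
  proof -
    have "g -` A \<subseteq> g -` B" using that(2) by blast
    then show ?thesis using that(1) uf_mono[OF P] by (simp add: img_def)
  qed
  have 4: "A \<inter> B \<in> img g P" if "A \<in> img g P" "B \<in> img g P" for A B
  proof -
    have "g -` A \<inter> g -` B \<in> P" using that uf_Int[OF P] by (simp add: img_def)
    then show ?thesis by (simp add: img_def)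
  qed
  have 5: "A \<in> img g P \<or> - A \<in> img g P" for A
    using uf_compl[OF P, of "g -` A"] by (simp add: img_def vimage_Compl)
  show ?thesis unfolding is_ultrafilter_def using 1 2 3 4 5 by blast
qed

lemma img_comp: "img (f \<circ> g) P = img f (img g P)"
  by (simp add: img_def vimage_comp)

lemma img_cong: assumes "is_ultrafilter P" "{j. f j = g j} \<in> P" shows "img f P = img g P"
proof -
  have "f -` C \<in> P \<longleftrightarrow> g -` C \<in> P" for C
  proof -
    have "f -` C \<inter> {j. f j = g j} = g -` C \<inter> {j. f j = g j}" by auto
    show ?thesis
    proof
      assume "f -` C \<in> P"
      then have "f -` C \<inter> {j. f j = g j} \<in> P" using uf_Int[OF assms(1) _ assms(2)] by blast
      then show "g -` C \<in> P" unfolding \<open>f -` C \<inter> _ = _\<close> using uf_mono[OF assms(1)] by blast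
    next
      assume "g -` C \<in> P"
      then have "g -` C \<inter> {j. f j = g j} \<in> P" using uf_Int[OF assms(1) _ assms(2)] by blast
      then show "f -` C \<in> P" unfolding \<open>f -` C \<inter> _ = _\<close>[symmetric] using uf_mono[OF assms(1)] by blast
    qed
  qed
  then show ?thesis by (simp add: img_def)
qed

lemma img_free: assumes "free_uf P" "inj g" shows "free_uf (img g P)"
proof -
  have "img g P \<noteq> principal_uf n" for n
  proof
    assume "img g P = principal_uf n"
    then have "{n} \<in> img g P" by (simp add: principal_uf_def)
    then have "g -` {n} \<in> P" by (simp add: img_def)
    moreover have "finite (g -` {n})" using assms(2) by (simp add: finite_vimageI)
    ultimately show False using free_finite[OF assms(1)] by blast
  qed
  then show ?thesis using img_uf assms(1) unfolding free_uf_def by blast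
qed

lemma img_const: assumes "free_uf P" "finite {j. f j \<noteq> c}" shows "img f P = principal_uf c"
proof -
  have "- {j. f j \<noteq> c} \<in> P" using free_cofinite[OF assms] .
  moreover have "- {j. f j \<noteq> c} = {j. f j = (\<lambda>_. c) j}" by auto
  ultimately have "{j. f j = (\<lambda>_. c) j} \<in> P" by simp
  moreover have "is_ultrafilter P" using assms(1) by (simp add: free_uf_def)
  ultimately have "img f P = img (\<lambda>_. c) P" using img_cong[of P f "\<lambda>_. c"] by simp
  also have "\<dots> = principal_uf c"
  proof (rule set_eqI)
    fix A
    have "(\<lambda>_. c) -` A = (if c \<in> A then UNIV else {})" by auto
    then show "A \<in> img (\<lambda>_. c) P \<longleftrightarrow> A \<in> principal_uf c"
      using uf_UNIV[of P] uf_empty[of P] assms(1) by (simp add: img_def principal_uf_def free_uf_def)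
  qed
  finally show ?thesis .
qed




lemma uf_extend:
  fixes \<B> :: "nat set set"
  assumes ne: "\<B> \<noteq> {}" and inf: "\<forall>B\<in>\<B>. infinite B"
    and int: "\<forall>B C. B\<in>\<B> \<longrightarrow> C\<in>\<B> \<longrightarrow> B\<inter>C \<in> \<B>"
  shows "\<exists>p. free_uf p \<and> \<B> \<subseteq> p"
proof -
  define Fs where "Fs = {F. \<B> \<subseteq> F \<and> (\<forall>A\<in>F. infinite A) \<and> (\<forall>A B. A\<in>F \<longrightarrow> B\<in>F \<longrightarrow> A\<inter>B\<in>F)
      \<and> (\<forall>A B. A\<in>F \<longrightarrow> A \<subseteq> B \<longrightarrow> B\<in>F)}"
  have FsD: "\<B> \<subseteq> F \<and> (\<forall>A\<in>F. infinite A) \<and> (\<forall>A B. A\<in>F \<longrightarrow> B\<in>F \<longrightarrow> A\<inter>B\<in>F)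
      \<and> (\<forall>A B. A\<in>F \<longrightarrow> A \<subseteq> B \<longrightarrow> B\<in>F)" if "F \<in> Fs" for F using that by (simp add: Fs_def)
  define F0 where "F0 = {B. \<exists>A\<in>\<B>. A \<subseteq> B}"
  have F0: "F0 \<in> Fs"
  proof -
    have "A \<inter> B \<in> F0" if ab: "A \<in> F0" "B \<in> F0" for A B
    proof -
      obtain A' B' where "A' \<in> \<B>" "B' \<in> \<B>" "A' \<subseteq> A" "B' \<subseteq> B" using ab F0_def by auto
      then show ?thesis using int unfolding F0_def by blast
    qed
    then have 3: "\<forall>A B. A\<in>F0 \<longrightarrow> B\<in>F0 \<longrightarrow> A\<inter>B\<in>F0" by blast
    have "infinite A" if "A \<in> F0" for A
      using that inf unfolding F0_def by (auto dest: finite_subset)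
    then have 2: "\<forall>A\<in>F0. infinite A" by blast
    have 1: "\<B> \<subseteq> F0" unfolding F0_def by blast
    have 4: "\<forall>A B. A\<in>F0 \<longrightarrow> A \<subseteq> B \<longrightarrow> B\<in>F0" unfolding F0_def by blast
    show ?thesis unfolding Fs_def mem_Collect_eq using 1 2 3 4 by blast
  qed
  have "\<exists>U\<in>Fs. \<forall>X\<in>C. X \<subseteq> U" if C: "C \<in> chains Fs" for C
  proof (cases "C = {}")
    case True then show ?thesis using F0 by blast
  next
    case False
    have CF: "C \<subseteq> Fs" and ch: "\<forall>A\<in>C. \<forall>B\<in>C. A \<subseteq> B \<or> B \<subseteq> A"
      using C unfolding chains_def chain_subset_def by auto
    have "\<Union>C \<in> Fs"
    proof -
      obtain F1 where "F1 \<in> C" using False by blast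
      then have 1: "\<B> \<subseteq> \<Union>C" using CF FsD by blast
      have 2: "\<forall>A\<in>\<Union>C. infinite A" using CF FsD by blast
      have 3: "A\<inter>B \<in> \<Union>C" if ab: "A \<in> \<Union>C" "B \<in> \<Union>C" for A B
      proof -
        obtain G H where GH: "G \<in> C" "H \<in> C" "A \<in> G" "B \<in> H" using ab by blast
        then have "G \<subseteq> H \<or> H \<subseteq> G" using ch by blast
        then show ?thesis
        proof
          assume "G \<subseteq> H" then have "A \<inter> B \<in> H" using GH CF FsD by blast
          then show ?thesis using GH by blast
        next
          assume "H \<subseteq> G" then have "A \<inter> B \<in> G" using GH CF FsD by blast
          then show ?thesis using GH by blast
        qed
      qed
      have 4: "B \<in> \<Union>C" if "A \<in> \<Union>C" "A \<subseteq> B" for A B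
        using that CF FsD by blast
      show ?thesis unfolding Fs_def mem_Collect_eq using 1 2 3 4 by blast
    qed
    then show ?thesis by blast
  qed
  then obtain M where M: "M \<in> Fs" and max: "\<forall>X\<in>Fs. M \<subseteq> X \<longrightarrow> X = M"
    using Zorn_Lemma2[of Fs] by blast
  have BM: "\<B> \<subseteq> M" and Minf: "\<forall>A\<in>M. infinite A" and Mint: "\<forall>A B. A\<in>M \<longrightarrow> B\<in>M \<longrightarrow> A\<inter>B\<in>M"
    and Mup: "\<forall>A B. A\<in>M \<longrightarrow> A \<subseteq> B \<longrightarrow> B\<in>M" using FsD[OF M] by auto
  have UM: "UNIV \<in> M" using BM ne Mup by blast
  have ext: "S \<in> M" if S: "\<forall>F\<in>M. infinite (S \<inter> F)" for S
  proof -
    define M' where "M' = {B. \<exists>F\<in>M. S\<inter>F \<subseteq> B}"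
    have "M' \<in> Fs"
    proof -
      have 1: "\<B> \<subseteq> M'" using BM unfolding M'_def by blast
      have 2: "\<forall>A\<in>M'. infinite A" using S unfolding M'_def by (auto dest: finite_subset)
      have 3: "A\<inter>B \<in> M'" if ab: "A \<in> M'" "B \<in> M'" for A B
      proof -
        obtain F G where "F \<in> M" "G \<in> M" "S\<inter>F \<subseteq> A" "S\<inter>G \<subseteq> B" using ab M'_def by auto
        then have "F \<inter> G \<in> M" "S \<inter> (F\<inter>G) \<subseteq> A \<inter> B" using Mint by blast+
        then show ?thesis unfolding M'_def by blast
      qed
      have 4: "B \<in> M'" if "A \<in> M'" "A \<subseteq> B" for A B
        using that unfolding M'_def by blast
      show ?thesis unfolding Fs_def mem_Collect_eq using 1 2 3 4 by blast
    qed
    moreover have "M \<subseteq> M'" unfolding M'_def by blast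
    ultimately have "M' = M" using max by blast
    moreover have "S \<in> M'" using UM unfolding M'_def by blast
    ultimately show ?thesis by simp
  qed
  have compl: "A \<in> M \<or> - A \<in> M" for A
  proof (cases "\<forall>F\<in>M. infinite (A \<inter> F)")
    case True then show ?thesis using ext by blast
  next
    case False
    then obtain F0 where F0: "F0 \<in> M" "finite (A \<inter> F0)" by blast
    have "infinite (- A \<inter> F)" if "F \<in> M" for F
    proof
      assume fin: "finite (- A \<inter> F)"
      have "F \<inter> F0 \<subseteq> (A \<inter> F0) \<union> (- A \<inter> F)" by blast
      then have "finite (F \<inter> F0)" using fin F0(2) by (meson finite_UnI finite_subset)
      moreover have "F \<inter> F0 \<in> M" using Mint that F0(1) by blast
      ultimately show False using Minf by blast
    qed
    then show ?thesis using ext by blast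
  qed
  have uf: "is_ultrafilter M"
    unfolding is_ultrafilter_def using UM Minf Mint Mup compl by blast
  have "M \<noteq> principal_uf n" for n
  proof
    assume "M = principal_uf n"
    then have "{n} \<in> M" by (simp add: principal_uf_def)
    then show False using Minf by blast
  qed
  then show ?thesis using uf BM unfolding free_uf_def by blast
qed




definition bas :: "nat set \<Rightarrow> nat set set set" where
  "bas A = {U \<in> betaw. A \<in> U}"

definition SB :: "nat set set set set" where
  "SB = {{U \<in> betaw. A \<in> U} | A. True}"

lemma betaw_top_SB: "betaw_top = topology_generated_by SB"
  by (simp add: betaw_top_def SB_def)

lemma topspace_betaw: "topspace betaw_top = betaw"
proof -
  have "\<Union>SB = betaw"
  proof
    show "\<Union>SB \<subseteq> betaw" unfolding SB_def by blast
    show "betaw \<subseteq> \<Union>SB"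
    proof
      fix U assume "U \<in> betaw"
      then have "U \<in> {U \<in> betaw. UNIV \<in> U}" using uf_UNIV by (simp add: betaw_def)
      then show "U \<in> \<Union>SB" unfolding SB_def by blast
    qed
  qed
  then show ?thesis by (simp add: betaw_top_SB)
qed

lemma open_bas: "openin betaw_top (bas A)"
proof -
  have "bas A \<in> SB" unfolding bas_def SB_def by blast
  then show ?thesis unfolding betaw_top_SB by (simp add: openin_topology_generated_by_iff generate_topology_on.Basis)
qed

lemma betaw_gen: "openin betaw_top W \<Longrightarrow> generate_topology_on SB W"
  unfolding betaw_top_SB by (simp add: openin_topology_generated_by_iff)

lemma bet_uf: "q \<in> betaw \<Longrightarrow> is_ultrafilter q" by (simp add: betaw_def)

lemma limit_gen:
  assumes P: "is_ultrafilter P" and G: "generate_topology_on SB W"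
  shows "img g P \<in> W \<Longrightarrow> {n. principal_uf (g n) \<in> W} \<in> P"
  using G
proof (induction)
  case Empty then show ?case by simp
next
  case (Int a b)
  then have "{n. principal_uf (g n) \<in> a} \<inter> {n. principal_uf (g n) \<in> b} \<in> P" using uf_Int[OF P] by blast
  moreover have "{n. principal_uf (g n) \<in> a} \<inter> {n. principal_uf (g n) \<in> b} = {n. principal_uf (g n) \<in> a \<inter> b}" by blast
  ultimately show ?case by simp
next
  case (UN K)
  then obtain k where k: "k \<in> K" "img g P \<in> k" by blast
  then have "{n. principal_uf (g n) \<in> k} \<in> P" using UN.IH by blast
  moreover have "{n. principal_uf (g n) \<in> k} \<subseteq> {n. principal_uf (g n) \<in> \<Union>K}" using k by blast
  ultimately show ?case using uf_mono[OF P] by blast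
next
  case (Basis s)
  then obtain A where s: "s = {U \<in> betaw. A \<in> U}" unfolding SB_def by blast
  then have "A \<in> img g P" using Basis.prems by simp
  then have "g -` A \<in> P" by (simp add: img_def)
  moreover have "{n. principal_uf (g n) \<in> s} = g -` A"
    using s principal_betaw by (auto simp: principal_uf_def)
  ultimately show ?case by simp
qed

lemma limit_open:
  assumes P: "is_ultrafilter P" and X: "X \<subseteq> betaw"
    and V: "openin (subtopology betaw_top X) V" and q: "img g P \<in> V"
    and R: "range principal_uf \<subseteq> X"
  shows "{n. principal_uf (g n) \<in> V} \<in> P"
proof -
  obtain W where W: "openin betaw_top W" "V = W \<inter> X" using V by (auto simp: openin_subtopology)
  have "{n. principal_uf (g n) \<in> W} \<in> P" using limit_gen[OF P betaw_gen[OF W(1)]] q W(2) by blast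
  moreover have "{n. principal_uf (g n) \<in> W} = {n. principal_uf (g n) \<in> V}" using W(2) R by blast
  ultimately show ?thesis by simp
qed

lemma dense_gen:
  assumes G: "generate_topology_on SB W"
  shows "q \<in> W \<Longrightarrow> q \<in> betaw \<Longrightarrow> \<exists>A\<in>q. bas A \<subseteq> W"
  using G
proof (induction arbitrary: q)
  case Empty then show ?case by simp
next
  case (Int a b)
  then obtain A B where AB: "A \<in> q" "bas A \<subseteq> a" "B \<in> q" "bas B \<subseteq> b" by blast
  then have "A \<inter> B \<in> q" using uf_Int bet_uf Int.prems(2) by blast
  moreover have "bas (A \<inter> B) \<subseteq> bas A \<inter> bas B"
  proof
    fix U assume U: "U \<in> bas (A \<inter> B)"
    then have "is_ultrafilter U" "A \<inter> B \<in> U" "U \<in> betaw" by (auto simp: bas_def bet_uf)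
    then have "A \<in> U" "B \<in> U" using uf_mono by blast+
    then show "U \<in> bas A \<inter> bas B" using \<open>U \<in> betaw\<close> by (simp add: bas_def)
  qed
  then have "bas (A \<inter> B) \<subseteq> a \<inter> b" using AB by blast
  ultimately show ?case by blast
next
  case (UN K)
  then obtain k where k: "k \<in> K" "q \<in> k" by blast
  then obtain A where "A \<in> q" "bas A \<subseteq> k" using UN.IH UN.prems(2) by blast
  then show ?case using k by blast
next
  case (Basis s)
  then obtain A where s: "s = {U \<in> betaw. A \<in> U}" unfolding SB_def by blast
  then show ?case using Basis.prems by (auto simp: bas_def)
qed

lemma dense_open:
  assumes X: "X \<subseteq> betaw" and R: "range principal_uf \<subseteq> X"
    and V: "openin (subtopology betaw_top X) V" and ne: "V \<noteq> {}"
  shows "\<exists>m. principal_uf m \<in> V"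
proof -
  obtain W where W: "openin betaw_top W" "V = W \<inter> X" using V by (auto simp: openin_subtopology)
  obtain q where q: "q \<in> V" using ne by blast
  then have "q \<in> betaw" "q \<in> W" using W X by auto
  then obtain A where A: "A \<in> q" "bas A \<subseteq> W" using dense_gen[OF betaw_gen[OF W(1)]] by blast
  have "A \<noteq> {}" using A(1) uf_empty bet_uf \<open>q \<in> betaw\<close> by blast
  then obtain m where "m \<in> A" by blast
  then have "A \<in> principal_uf m" by (simp add: principal_uf_def)
  then have "principal_uf m \<in> bas A" using principal_betaw by (simp add: bas_def)
  then show ?thesis using A(2) W(2) R by blast
qed

lemma topspace_TX: "X \<subseteq> betaw \<Longrightarrow> topspace (subtopology betaw_top X) = X"
  by (simp add: topspace_betaw Int_absorb1)

lemma open_TX_bas: "openin (subtopology betaw_top X) (bas A \<inter> X)"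
  by (auto simp: openin_subtopology intro: open_bas)

lemma bas_finite:
  assumes "X \<subseteq> betaw" "range principal_uf \<subseteq> X" "finite E"
  shows "bas E \<inter> X = principal_uf ` E"
proof
  show "bas E \<inter> X \<subseteq> principal_uf ` E"
  proof
    fix U assume "U \<in> bas E \<inter> X"
    then have "is_ultrafilter U" "E \<in> U" by (auto simp: bas_def betaw_def)
    then show "U \<in> principal_uf ` E" using uf_finite assms(3) by blast
  qed
  show "principal_uf ` E \<subseteq> bas E \<inter> X"
  proof
    fix U assume "U \<in> principal_uf ` E"
    then obtain a where a: "a \<in> E" "U = principal_uf a" by blast
    then have "E \<in> U" by (simp add: principal_uf_def)
    then show "U \<in> bas E \<inter> X" using a principal_betaw assms(2) by (auto simp: bas_def)
  qed
qed

lemma closed_fin: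
  assumes X: "X \<subseteq> betaw" and R: "range principal_uf \<subseteq> X" and E: "finite E"
  shows "closedin (subtopology betaw_top X) (principal_uf ` E)"
proof -
  have "X - principal_uf ` E = bas (- E) \<inter> X"
  proof -
    have "U \<in> principal_uf ` E \<longleftrightarrow> - E \<notin> U" if "U \<in> X" for U
    proof -
      have U: "is_ultrafilter U" using that X by (auto simp: betaw_def)
      have "U \<in> principal_uf ` E \<longleftrightarrow> U \<in> bas E \<inter> X" using bas_finite[OF X R E] by simp
      also have "\<dots> \<longleftrightarrow> E \<in> U" using that X by (auto simp: bas_def)
      also have "\<dots> \<longleftrightarrow> - E \<notin> U" using uf_compl_iff[OF U, of E] by blast
      finally show ?thesis .
    qed
    then show ?thesis using X by (auto simp: bas_def)
  qed
  moreover have "principal_uf ` E \<subseteq> X" using R by blast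
  ultimately show ?thesis
    unfolding closedin_def using topspace_TX[OF X] open_TX_bas by metis
qed




lemma topspace_vietoris: "topspace (vietoris T) = CL T"
proof -
  have "\<Union>({{F \<in> CL T. F \<subseteq> U} | U. openin T U} \<union> {{F \<in> CL T. F \<inter> U \<noteq> {}} | U. openin T U}) = CL T"
  proof
    show "\<Union>({{F \<in> CL T. F \<subseteq> U} | U. openin T U} \<union> {{F \<in> CL T. F \<inter> U \<noteq> {}} | U. openin T U}) \<subseteq> CL T"
      by auto
    show "CL T \<subseteq> \<Union>({{F \<in> CL T. F \<subseteq> U} | U. openin T U} \<union> {{F \<in> CL T. F \<inter> U \<noteq> {}} | U. openin T U})"
    proof
      fix F assume F: "F \<in> CL T"
      then have "F \<subseteq> topspace T" by (simp add: CL_def closedin_subset)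
      then have "F \<in> {F \<in> CL T. F \<subseteq> topspace T}" using F by simp
      then show "F \<in> \<Union>({{F \<in> CL T. F \<subseteq> U} | U. openin T U} \<union> {{F \<in> CL T. F \<inter> U \<noteq> {}} | U. openin T U})"
        by (intro UnionI[of "{F \<in> CL T. F \<subseteq> topspace T}"] UnI1) auto
    qed
  qed
  then show ?thesis unfolding vietoris_def by simp
qed

lemma open_sub: "openin T U \<Longrightarrow> openin (vietoris T) {F \<in> CL T. F \<subseteq> U}"
  unfolding vietoris_def openin_topology_generated_by_iff
  by (rule generate_topology_on.Basis, rule UnI1) auto

lemma open_meet: "openin T U \<Longrightarrow> openin (vietoris T) {F \<in> CL T. F \<inter> U \<noteq> {}}"
  unfolding vietoris_def openin_topology_generated_by_iff
  by (rule generate_topology_on.Basis, rule UnI2) auto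

lemma principal_inj: "principal_uf a = principal_uf b \<Longrightarrow> a = b"
proof -
  assume eq: "principal_uf a = principal_uf b"
  have "{a} \<in> principal_uf a" by (simp add: principal_uf_def)
  then have "{a} \<in> principal_uf b" using eq by simp
  then show "a = b" by (simp add: principal_uf_def)
qed




lemma fin_CL:
  assumes X: "X \<subseteq> betaw" and R: "range principal_uf \<subseteq> X" and E: "finite E" "E \<noteq> {}"
  shows "principal_uf ` E \<in> CL (subtopology betaw_top X)"
  using closed_fin[OF X R E(1)] E(2) by (simp add: CL_def)

lemma open_singleton:
  assumes X: "X \<subseteq> betaw" and R: "range principal_uf \<subseteq> X" and E: "finite E" "E \<noteq> {}"
  shows "openin (vietoris (subtopology betaw_top X)) {principal_uf ` E}"
proof -
  let ?T = "subtopology betaw_top X"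
  let ?Q = "principal_uf ` E"
  have QCL: "?Q \<in> CL ?T" using fin_CL[OF assms] .
  have "openin ?T ?Q" using bas_finite[OF X R E(1)] open_TX_bas by metis
  then have o0: "openin (vietoris ?T) {H \<in> CL ?T. H \<subseteq> ?Q}" by (rule open_sub)
  have "openin ?T {principal_uf a}" for a
    using bas_finite[OF X R, of "{a}"] open_TX_bas[where A="{a}" and X=X] by simp
  then have "\<And>a. a \<in> E \<Longrightarrow> openin (vietoris ?T) {H \<in> CL ?T. H \<inter> {principal_uf a} \<noteq> {}}"
    using open_meet by blast
  then have "openin (vietoris ?T) ((\<Inter>a\<in>E. {H \<in> CL ?T. H \<inter> {principal_uf a} \<noteq> {}}) \<inter> topspace (vietoris ?T))"
    by (rule openin_INT[OF E(1)])
  then have o1: "openin (vietoris ?T) ({H \<in> CL ?T. H \<subseteq> ?Q} \<inter> ((\<Inter>a\<in>E. {H \<in> CL ?T. H \<inter> {principal_uf a} \<noteq> {}}) \<inter> topspace (vietoris ?T)))"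
    using o0 by (rule openin_Int[rotated])
  have "{H \<in> CL ?T. H \<subseteq> ?Q} \<inter> ((\<Inter>a\<in>E. {H \<in> CL ?T. H \<inter> {principal_uf a} \<noteq> {}}) \<inter> topspace (vietoris ?T)) = {?Q}"
  proof
    have "?Q \<in> (\<Inter>a\<in>E. {H \<in> CL ?T. H \<inter> {principal_uf a} \<noteq> {}})" using QCL by blast
    then show "{?Q} \<subseteq> {H \<in> CL ?T. H \<subseteq> ?Q} \<inter> ((\<Inter>a\<in>E. {H \<in> CL ?T. H \<inter> {principal_uf a} \<noteq> {}}) \<inter> topspace (vietoris ?T))"
      using QCL by (simp add: topspace_vietoris)
    show "{H \<in> CL ?T. H \<subseteq> ?Q} \<inter> ((\<Inter>a\<in>E. {H \<in> CL ?T. H \<inter> {principal_uf a} \<noteq> {}}) \<inter> topspace (vietoris ?T)) \<subseteq> {?Q}"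
    proof
      fix H assume H: "H \<in> {H \<in> CL ?T. H \<subseteq> ?Q} \<inter> ((\<Inter>a\<in>E. {H \<in> CL ?T. H \<inter> {principal_uf a} \<noteq> {}}) \<inter> topspace (vietoris ?T))"
      then have 1: "H \<subseteq> ?Q" by blast
      have "\<forall>a\<in>E. H \<inter> {principal_uf a} \<noteq> {}" using H by blast
      then have "?Q \<subseteq> H" by blast
      then show "H \<in> {?Q}" using 1 by blast
    qed
  qed
  then show ?thesis using o1 by simp
qed




lemma sep_fin:
  assumes X: "X \<subseteq> betaw" and R: "range principal_uf \<subseteq> X" and E: "finite E"
    and G: "G \<in> CL (subtopology betaw_top X)" and ne: "G \<noteq> principal_uf ` E"
  shows "\<exists>N. openin (vietoris (subtopology betaw_top X)) N \<and> G \<in> N \<and> principal_uf ` E \<notin> N"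
proof -
  let ?T = "subtopology betaw_top X"
  let ?Q = "principal_uf ` E"
  have "closedin ?T G" using G by (simp add: CL_def)
  then have "G \<subseteq> topspace ?T" by (rule closedin_subset)
  then have GX: "G \<subseteq> X" using topspace_TX[OF X] by simp
  show ?thesis
  proof (cases "G \<subseteq> ?Q")
    case False
    have "openin ?T (topspace ?T - ?Q)" using closed_fin[OF X R E] by (simp add: closedin_def)
    then have o: "openin ?T (X - ?Q)" using topspace_TX[OF X] by simp
    have "G \<inter> (X - ?Q) \<noteq> {}" using False GX by blast
    then have "G \<in> {H \<in> CL ?T. H \<inter> (X - ?Q) \<noteq> {}}" using G by simp
    moreover have "?Q \<inter> (X - ?Q) = {}" by (rule Diff_disjoint)
    then have "?Q \<notin> {H \<in> CL ?T. H \<inter> (X - ?Q) \<noteq> {}}" by simp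
    ultimately show ?thesis using open_meet[OF o] by blast
  next
    case True
    then obtain a where a: "a \<in> E" "principal_uf a \<notin> G" using ne by blast
    have "openin ?T (topspace ?T - principal_uf ` {a})" using closed_fin[OF X R, of "{a}"] by (simp add: closedin_def)
    then have o: "openin ?T (X - {principal_uf a})" using topspace_TX[OF X] by simp
    have "G \<subseteq> X - {principal_uf a}" using GX a(2) by blast
    then have "G \<in> {H \<in> CL ?T. H \<subseteq> X - {principal_uf a}}" using G by simp
    moreover have "principal_uf a \<in> ?Q" using a(1) by simp
    then have "\<not> ?Q \<subseteq> X - {principal_uf a}" by blast
    then have "?Q \<notin> {H \<in> CL ?T. H \<subseteq> X - {principal_uf a}}" by simp
    ultimately show ?thesis using open_sub[OF o] by blast
  qed
qed

lemma loc_const_cont: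
  assumes "\<forall>x\<in>topspace T. \<exists>U. openin T U \<and> x \<in> U \<and> (\<forall>y\<in>U. f y = f x)"
  shows "continuous_map T euclideanreal f"
  unfolding continuous_map_def
proof (intro conjI allI impI)
  show "f \<in> topspace T \<rightarrow> topspace euclideanreal" by simp
  fix V :: "real set" assume "openin euclideanreal V"
  show "openin T {x \<in> topspace T. f x \<in> V}"
  proof (subst openin_subopen, intro ballI)
    fix x assume x: "x \<in> {x \<in> topspace T. f x \<in> V}"
    then obtain U where U: "openin T U" "x \<in> U" "\<forall>y\<in>U. f y = f x" using assms by blast
    have "U \<subseteq> topspace T" using openin_subset[OF U(1)] .
    then have "U \<subseteq> {x \<in> topspace T. f x \<in> V}" using U(3) x by auto
    then show "\<exists>U. openin T U \<and> x \<in> U \<and> U \<subseteq> {x \<in> topspace T. f x \<in> V}" using U by blast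
  qed
qed




lemma cluster:
  fixes F :: "nat \<Rightarrow> nat set"
  assumes X: "X \<subseteq> betaw" and R: "range principal_uf \<subseteq> X"
    and PC: "pseudocompact (vietoris (subtopology betaw_top X))"
    and Fne: "\<forall>j. finite (F j) \<and> F j \<noteq> {}" and disj: "\<forall>i j. i \<noteq> j \<longrightarrow> F i \<inter> F j = {}"
  shows "\<exists>G\<in>CL (subtopology betaw_top X). \<forall>N. openin (vietoris (subtopology betaw_top X)) N \<and> G \<in> N
            \<longrightarrow> infinite {j. principal_uf ` F j \<in> N}"
proof (rule ccontr)
  let ?T = "subtopology betaw_top X"
  let ?V = "vietoris ?T"
  define Fp where "Fp j = principal_uf ` F j" for j
  assume "\<not> ?thesis"
  then have "\<forall>G\<in>CL ?T. \<not> (\<forall>N. openin ?V N \<and> G \<in> N \<longrightarrow> infinite {j. Fp j \<in> N})"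
    unfolding Fp_def by blast
  then have nc: "\<forall>G\<in>CL ?T. \<exists>N. openin ?V N \<and> G \<in> N \<and> finite {j. Fp j \<in> N}"
    by auto
  have inj: "i = j" if "Fp i = Fp j" for i j
  proof -
    obtain a where a: "a \<in> F i" using Fne by blast
    then have "principal_uf a \<in> Fp j" using that unfolding Fp_def by blast
    then obtain b where "b \<in> F j" "principal_uf a = principal_uf b" unfolding Fp_def by blast
    then have "a \<in> F j" using principal_inj by blast
    then show ?thesis using a disj by blast
  qed
  define f where "f H = (if \<exists>j. H = Fp j then real (SOME j. H = Fp j) else 0)" for H
  have fj: "f (Fp j) = real j" for j
  proof -
    have "Fp j = Fp (SOME j'. Fp j = Fp j')" by (rule someI[of _ j]) simp
    then have "(SOME j'. Fp j = Fp j') = j" using inj by metis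
    then show ?thesis unfolding f_def by auto
  qed
  have FpCL: "Fp j \<in> CL ?T" for j unfolding Fp_def using fin_CL[OF X R] Fne by blast
  have TV: "topspace ?V = CL ?T" by (rule topspace_vietoris)
  have "\<forall>H\<in>topspace ?V. \<exists>U. openin ?V U \<and> H \<in> U \<and> (\<forall>y\<in>U. f y = f H)"
  proof
    fix H assume H: "H \<in> topspace ?V"
    then have HCL: "H \<in> CL ?T" using TV by simp
    show "\<exists>U. openin ?V U \<and> H \<in> U \<and> (\<forall>y\<in>U. f y = f H)"
    proof (cases "\<exists>j. H = Fp j")
      case True
      then obtain j where j: "H = Fp j" by blast
      have "openin ?V {H}" unfolding j Fp_def using open_singleton[OF X R] Fne by blast
      then show ?thesis by blast
    next
      case False
      obtain N where N: "openin ?V N" "H \<in> N" "finite {j. Fp j \<in> N}" using nc HCL by blast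
      have "\<exists>N'. openin ?V N' \<and> H \<in> N' \<and> Fp j \<notin> N'" for j
      proof -
        have fin: "finite (F j)" using Fne by blast
        have "H \<noteq> Fp j" using False by blast
        then have ne: "H \<noteq> principal_uf ` F j" unfolding Fp_def .
        show ?thesis using sep_fin[OF X R fin HCL ne] unfolding Fp_def .
      qed
      then obtain Nf where Nf: "\<And>j. openin ?V (Nf j) \<and> H \<in> Nf j \<and> Fp j \<notin> Nf j" by metis
      define J where "J = {j. Fp j \<in> N}"
      define U where "U = N \<inter> ((\<Inter>j\<in>J. Nf j) \<inter> topspace ?V)"
      have "\<And>j. j \<in> J \<Longrightarrow> openin ?V (Nf j)" using Nf by blast
      then have "openin ?V ((\<Inter>j\<in>J. Nf j) \<inter> topspace ?V)"
        using openin_INT[of J ?V Nf] N(3) unfolding J_def by blast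
      then have oU: "openin ?V U" unfolding U_def using N(1) by (rule openin_Int[rotated])
      have HU: "H \<in> U" unfolding U_def using N(2) Nf H by blast
      have "f y = f H" if y: "y \<in> U" for y
      proof -
        have "\<not> (\<exists>j. y = Fp j)"
        proof
          assume "\<exists>j. y = Fp j"
          then obtain j where yj: "y = Fp j" by blast
          then have "j \<in> J" using y unfolding U_def J_def by blast
          then have "y \<in> Nf j" using y unfolding U_def by blast
          then show False using Nf yj by blast
        qed
        then show ?thesis using False unfolding f_def by simp
      qed
      then show ?thesis using oU HU by blast
    qed
  qed
  then have "continuous_map ?V euclideanreal f" by (rule loc_const_cont)
  then have "bounded (f ` topspace ?V)" using PC unfolding pseudocompact_def by blast
  then obtain a where a: "\<forall>x\<in>f ` topspace ?V. \<bar>x\<bar> \<le> a" unfolding bounded_real by blast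
  define j where "j = nat \<lceil>a\<rceil> + 1"
  have "f (Fp j) \<in> f ` topspace ?V" using FpCL TV by blast
  then have "\<bar>real j\<bar> \<le> a" using a fj by metis
  moreover have "real j > a" unfolding j_def by linarith
  ultimately show False by simp
qed




lemma uf_eq: assumes "is_ultrafilter x" "is_ultrafilter y" "x \<subseteq> y" shows "x = y"
proof
  show "y \<subseteq> x"
  proof
    fix A assume A: "A \<in> y"
    show "A \<in> x"
    proof (rule ccontr)
      assume "A \<notin> x"
      then have "- A \<in> x" using uf_compl[OF assms(1)] by blast
      then have "- A \<in> y" using assms(3) by blast
      then show False using uf_not_both[OF assms(2) A] by blast
    qed
  qed
qed (rule assms(3))

lemma lemmaA:
  fixes F :: "nat \<Rightarrow> nat set"
  assumes X: "X \<subseteq> betaw" and R: "range principal_uf \<subseteq> X"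
    and PC: "pseudocompact (vietoris (subtopology betaw_top X))"
    and Fne: "\<forall>j. finite (F j) \<and> F j \<noteq> {}" and disj: "\<forall>i j. i \<noteq> j \<longrightarrow> F i \<inter> F j = {}"
  shows "\<exists>p. free_uf p \<and> (\<forall>\<sigma>. (\<forall>j. \<sigma> j \<in> F j) \<longrightarrow> img \<sigma> p \<in> X)"
proof -
  let ?T = "subtopology betaw_top X"
  let ?V = "vietoris ?T"
  obtain G where G: "G \<in> CL ?T"
    and cl: "\<forall>N. openin ?V N \<and> G \<in> N \<longrightarrow> infinite {j. principal_uf ` F j \<in> N}"
    using cluster[OF X R PC Fne disj] by blast
  define \<B> where "\<B> = {{j. principal_uf ` F j \<in> N} | N. openin ?V N \<and> G \<in> N}"
  have inB: "{j. principal_uf ` F j \<in> N} \<in> \<B>" if "openin ?V N" "G \<in> N" for N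
    unfolding \<B>_def using that by blast
  have TV: "topspace ?V = CL ?T" by (rule topspace_vietoris)
  have ne: "\<B> \<noteq> {}" using inB[OF openin_topspace[of ?V]] G TV by blast
  have inf: "\<forall>B\<in>\<B>. infinite B" using cl unfolding \<B>_def by blast
  have int: "\<forall>B C. B\<in>\<B> \<longrightarrow> C\<in>\<B> \<longrightarrow> B\<inter>C \<in> \<B>"
  proof (intro allI impI)
    fix B C assume "B \<in> \<B>" "C \<in> \<B>"
    then obtain N1 N2 where N: "openin ?V N1" "G \<in> N1" "B = {j. principal_uf ` F j \<in> N1}"
      "openin ?V N2" "G \<in> N2" "C = {j. principal_uf ` F j \<in> N2}" unfolding \<B>_def by blast
    then have "B \<inter> C = {j. principal_uf ` F j \<in> N1 \<inter> N2}" by blast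
    moreover have "openin ?V (N1 \<inter> N2)" "G \<in> N1 \<inter> N2" using N openin_Int by auto
    ultimately show "B \<inter> C \<in> \<B>" using inB[of "N1 \<inter> N2"] by simp
  qed
  obtain p where p: "free_uf p" "\<B> \<subseteq> p" using uf_extend[OF ne inf int] by blast
  have puf: "is_ultrafilter p" using p(1) by (simp add: free_uf_def)
  have nb: "{j. principal_uf ` F j \<in> N} \<in> p" if "openin ?V N" "G \<in> N" for N
    using inB[OF that] p(2) by blast
  have "closedin ?T G" using G by (simp add: CL_def)
  then have "G \<subseteq> topspace ?T" by (rule closedin_subset)
  then have GX: "G \<subseteq> X" using topspace_TX[OF X] by simp
  have "img \<sigma> p \<in> X" if sel: "\<forall>j. \<sigma> j \<in> F j" for \<sigma>
  proof -
    have ex: "\<exists>x\<in>G. range \<sigma> \<in> x"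
    proof (rule ccontr)
      assume nex: "\<not> (\<exists>x\<in>G. range \<sigma> \<in> x)"
      define U where "U = bas (- range \<sigma>) \<inter> X"
      have oU: "openin ?T U" unfolding U_def by (rule open_TX_bas)
      have "G \<subseteq> U"
      proof
        fix x assume x: "x \<in> G"
        then have xX: "x \<in> X" using GX by blast
        then have xb: "x \<in> betaw" using X by blast
        then have "is_ultrafilter x" by (rule bet_uf)
        moreover have "range \<sigma> \<notin> x" using nex x by blast
        ultimately have "- range \<sigma> \<in> x" using uf_compl by blast
        then show "x \<in> U" unfolding U_def bas_def using xX xb by blast
      qed
      then have "G \<in> {H \<in> CL ?T. H \<subseteq> U}" using G by simp
      then have "{j. principal_uf ` F j \<in> {H \<in> CL ?T. H \<subseteq> U}} \<in> p" using nb open_sub[OF oU] by blast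
      then have "infinite {j. principal_uf ` F j \<in> {H \<in> CL ?T. H \<subseteq> U}}" using free_infinite[OF p(1)] by blast
      then obtain j where "principal_uf ` F j \<in> {H \<in> CL ?T. H \<subseteq> U}" using not_finite_existsD by blast
      then have "principal_uf ` F j \<subseteq> U" by blast
      then have "principal_uf (\<sigma> j) \<in> U" using sel by blast
      then have "- range \<sigma> \<in> principal_uf (\<sigma> j)" unfolding U_def bas_def by blast
      then show False by (simp add: principal_uf_def)
    qed
    then obtain x where x: "x \<in> G" "range \<sigma> \<in> x" by blast
    have xX: "x \<in> X" using x GX by blast
    then have xb: "x \<in> betaw" using X by blast
    then have xuf: "is_ultrafilter x" by (rule bet_uf)
    have "x \<subseteq> img \<sigma> p"
    proof
      fix D assume D: "D \<in> x"
      define D' where "D' = D \<inter> range \<sigma>"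
      have D'x: "D' \<in> x" unfolding D'_def using uf_Int[OF xuf D x(2)] .
      define N where "N = {H \<in> CL ?T. H \<inter> (bas D' \<inter> X) \<noteq> {}}"
      have oN: "openin ?V N" unfolding N_def by (rule open_meet[OF open_TX_bas])
      have "x \<in> G \<inter> (bas D' \<inter> X)" using x(1) xX xb D'x by (simp add: bas_def)
      then have "G \<in> N" unfolding N_def using G by blast
      then have S: "{j. principal_uf ` F j \<in> N} \<in> p" using nb oN by blast
      have "{j. principal_uf ` F j \<in> N} \<subseteq> \<sigma> -` D"
      proof
        fix j assume "j \<in> {j. principal_uf ` F j \<in> N}"
        then have "principal_uf ` F j \<inter> (bas D' \<inter> X) \<noteq> {}" unfolding N_def by blast
        then obtain a where a: "a \<in> F j" "principal_uf a \<in> bas D'" by blast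
        then have "D' \<in> principal_uf a" by (simp add: bas_def)
        then have "a \<in> D'" by (simp add: principal_uf_def)
        then obtain i where ai: "a \<in> D" "a = \<sigma> i" unfolding D'_def by blast
        then have "a \<in> F i" using sel by blast
        then have "i = j" using a(1) disj by blast
        then show "j \<in> \<sigma> -` D" using ai by simp
      qed
      then have "\<sigma> -` D \<in> p" using uf_mono[OF puf S] by blast
      then show "D \<in> img \<sigma> p" by (simp add: img_def)
    qed
    then have "x = img \<sigma> p" using uf_eq[OF xuf img_uf[OF puf]] by blast
    then show ?thesis using xX by simp
  qed
  then show ?thesis using p(1) by blast
qed




definition EC :: "(nat \<Rightarrow> nat) \<Rightarrow> nat set \<Rightarrow> bool" where
  "EC g A \<longleftrightarrow> (\<exists>c. finite {a\<in>A. g a \<noteq> c})"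

definition SW :: "(nat \<Rightarrow> nat) \<Rightarrow> nat set \<Rightarrow> bool" where
  "SW g A \<longleftrightarrow> (\<exists>N. \<forall>a\<in>A. \<forall>b\<in>A. N \<le> a \<longrightarrow> a < b \<longrightarrow> g a < b \<and> a \<le> g b)"

definition Dk :: "(nat \<Rightarrow> nat) \<Rightarrow> nat set set" where
  "Dk g = {A. infinite A \<and> (EC g A \<or> SW g A)}"

primrec sq :: "(nat \<Rightarrow> nat) \<Rightarrow> nat set \<Rightarrow> nat \<Rightarrow> nat" where
  "sq g A 0 = (LEAST b. b \<in> A)"
| "sq g A (Suc i) = (LEAST b. b \<in> A \<and> sq g A i < b \<and> g (sq g A i) < b \<and> sq g A i \<le> g b)"

lemma sq_props:
  assumes A: "infinite A" and fib: "\<forall>c. finite {a\<in>A. g a = c}"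
  shows "sq g A i \<in> A \<and> sq g A i < sq g A (Suc i) \<and> g (sq g A i) < sq g A (Suc i) \<and> sq g A i \<le> g (sq g A (Suc i))"
proof -
  have ex: "\<exists>b. b \<in> A \<and> v < b \<and> w < b \<and> v \<le> g b" for v w
  proof -
    have f1: "finite {a\<in>A. a \<le> max v w}" by simp
    have "{a\<in>A. g a < v} = (\<Union>c<v. {a\<in>A. g a = c})" by blast
    then have f2: "finite {a\<in>A. g a < v}" using fib by simp
    have "infinite (A - ({a\<in>A. a \<le> max v w} \<union> {a\<in>A. g a < v}))"
      using A f1 f2 by (simp add: Diff_infinite_finite)
    then obtain b where "b \<in> A - ({a\<in>A. a \<le> max v w} \<union> {a\<in>A. g a < v})"
      using infinite_imp_nonempty by blast
    then show ?thesis by auto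
  qed
  have inA: "sq g A i \<in> A" for i
  proof (cases i)
    case 0
    have "\<exists>b. b \<in> A" using A infinite_imp_nonempty by blast
    from LeastI_ex[OF this] show ?thesis using 0 by simp
  next
    case (Suc j)
    show ?thesis using LeastI_ex[OF ex[of "sq g A j" "g (sq g A j)"]] Suc by simp
  qed
  have "sq g A (Suc i) \<in> A \<and> sq g A i < sq g A (Suc i) \<and> g (sq g A i) < sq g A (Suc i) \<and> sq g A i \<le> g (sq g A (Suc i))"
    using LeastI_ex[OF ex[of "sq g A i" "g (sq g A i)"]] by simp
  then show ?thesis using inA by blast
qed

declare sq.simps[simp del]

lemma Dk_dense:
  assumes A: "infinite A" shows "\<exists>B\<in>Dk g. B \<subseteq> A"
proof (cases "\<exists>c. infinite {a\<in>A. g a = c}")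
  case True
  then obtain c where c: "infinite {a\<in>A. g a = c}" by blast
  have "EC g {a\<in>A. g a = c}" unfolding EC_def by (rule exI[of _ c]) simp
  moreover have "{a\<in>A. g a = c} \<subseteq> A" by blast
  ultimately show ?thesis using c unfolding Dk_def mem_Collect_eq by blast
next
  case False
  then have fib: "\<forall>c. finite {a\<in>A. g a = c}" by blast
  let ?s = "sq g A"
  have P: "?s i \<in> A \<and> ?s i < ?s (Suc i) \<and> g (?s i) < ?s (Suc i) \<and> ?s i \<le> g (?s (Suc i))" for i
    using sq_props[OF A fib] by blast
  have sm: "strict_mono ?s" unfolding strict_mono_Suc_iff using P by blast
  have mono: "?s i \<le> ?s j" if "i \<le> j" for i j using strict_mono_less_eq[OF sm] that by blast
  have B1: "range ?s \<subseteq> A" using P by blast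
  have "inj ?s" using sm by (rule strict_mono_imp_inj_on)
  then have B2: "infinite (range ?s)" using finite_imageD infinite_UNIV_nat by blast
  have "SW g (range ?s)"
    unfolding SW_def
  proof (intro exI[of _ 0] ballI impI)
    fix a b assume a: "a \<in> range ?s" and b: "b \<in> range ?s" and ab: "a < b"
    obtain i j where ij: "a = ?s i" "b = ?s j" using a b by blast
    then have "i < j" using ab sm by (metis not_less_iff_gr_or_eq strict_mono_less)
    then obtain j' where j': "j = Suc j'" "i \<le> j'" by (metis less_Suc_eq_le lessE)
    have "g a < ?s (Suc i)" using P ij by blast
    also have "?s (Suc i) \<le> b" using mono[of "Suc i" j] \<open>i < j\<close> ij by simp
    finally have 1: "g a < b" .
    have "a \<le> ?s j'" using mono[OF j'(2)] ij by simp
    also have "?s j' \<le> g b" using P[of j'] ij j' by simp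
    finally show "g a < b \<and> a \<le> g b" using 1 by simp
  qed
  then show ?thesis using B1 B2 unfolding Dk_def mem_Collect_eq by blast
qed

lemma Dk_open_dense: "open_dense (Dk g)"
  unfolding open_dense_def
proof (intro conjI allI impI ballI)
  fix B assume "B \<in> Dk g" then show "infinite B" by (simp add: Dk_def)
next
  fix A :: "nat set" assume "infinite A" then show "\<exists>B\<in>Dk g. B \<subseteq> A" by (rule Dk_dense)
next
  fix B C assume H: "B \<in> Dk g \<and> infinite C \<and> finite (C - B)"
  then have B: "infinite B" "EC g B \<or> SW g B" and C: "infinite C" "finite (C - B)" by (auto simp: Dk_def)
  have "EC g C \<or> SW g C"
    using B(2)
  proof
    assume "EC g B"
    then obtain c where c: "finite {a\<in>B. g a \<noteq> c}" unfolding EC_def by blast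
    have "{a\<in>C. g a \<noteq> c} \<subseteq> (C - B) \<union> {a\<in>B. g a \<noteq> c}" by blast
    then have "finite {a\<in>C. g a \<noteq> c}" using c C(2) by (meson finite_UnI finite_subset)
    then show ?thesis unfolding EC_def by blast
  next
    assume "SW g B"
    then obtain N where N: "\<forall>a\<in>B. \<forall>b\<in>B. N \<le> a \<longrightarrow> a < b \<longrightarrow> g a < b \<and> a \<le> g b" unfolding SW_def by blast
    obtain M where M: "\<forall>a\<in>C - B. a < M" using C(2) finite_nat_bounded by blast
    have "\<forall>a\<in>C. \<forall>b\<in>C. max N M \<le> a \<longrightarrow> a < b \<longrightarrow> g a < b \<and> a \<le> g b"
    proof (intro ballI impI)
      fix a b assume a: "a \<in> C" and b: "b \<in> C" and am: "max N M \<le> a" and ab: "a < b"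
      have "a \<in> B"
      proof (rule ccontr)
        assume "a \<notin> B" then have "a < M" using M a by blast
        then show False using am by simp
      qed
      moreover have "b \<in> B"
      proof (rule ccontr)
        assume "b \<notin> B" then have "b < M" using M b by blast
        then show False using am ab by simp
      qed
      ultimately show "g a < b \<and> a \<le> g b" using N am ab by simp
    qed
    then show ?thesis unfolding SW_def by blast
  qed
  then show "C \<in> Dk g" using C by (simp add: Dk_def)
qed




lemma key:
  fixes f :: "'k \<Rightarrow> nat \<Rightarrow> nat" and K :: "'k set"
  assumes X: "X \<subseteq> betaw" and R: "range principal_uf \<subseteq> X"
    and PC: "pseudocompact (vietoris (subtopology betaw_top X))"
    and LH: "less_than_h K"
  shows "\<exists>P. free_uf P \<and> (\<forall>k\<in>K. img (f k) P \<in> X)"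
proof -
  define \<D> where "\<D> = (\<lambda>k. Dk (f k)) ` K"
  have "(card_of \<D>, card_of K) \<in> ordLeq" unfolding \<D>_def by (rule card_of_image)
  moreover have "\<forall>D\<in>\<D>. open_dense D" unfolding \<D>_def using Dk_open_dense by blast
  ultimately obtain A where A: "infinite A" "\<forall>D\<in>\<D>. A \<in> D"
    using LH unfolding less_than_h_def by blast
  then have Ak: "A \<in> Dk (f k)" if "k \<in> K" for k unfolding \<D>_def using that by blast
  define e where "e = enumerate A"
  have sm: "strict_mono e" unfolding strict_mono_def e_def using enumerate_mono[OF _ A(1)] by blast
  have eA: "e n \<in> A" for n unfolding e_def using enumerate_in_set[OF A(1)] .
  have ge: "n \<le> e n" for n using strict_mono_imp_increasing[OF sm] .
  have mono: "e i \<le> e j" if "i \<le> j" for i j using strict_mono_less_eq[OF sm] that by blast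
  have less: "e i < e j" if "i < j" for i j using strict_mono_less[OF sm] that by blast
  define lo where "lo j = (if j = 0 then 0 else e (2*j - 1))" for j
  define F where "F j = {lo j ..< e (2*j+1)}" for j
  have lo_le: "lo j \<le> e (2*j)" for j
  proof (cases "j = 0")
    case True then show ?thesis by (simp add: lo_def)
  next
    case False then have "2*j - 1 < 2*j" by simp
    then show ?thesis using less False by (simp add: lo_def less_imp_le)
  qed
  have e2: "e (2*j) < e (2*j+1)" for j using less by simp
  have loF: "lo j \<in> F j" for j using lo_le e2 unfolding F_def by (meson atLeastLessThan_iff le_less_trans order_refl)
  have Fne: "\<forall>j. finite (F j) \<and> F j \<noteq> {}" using loF unfolding F_def by blast
  have sep: "F i \<inter> F j = {}" if "i < j" for i j
  proof -
    have "2*i+1 \<le> 2*j - 1" using that by simp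
    then have "e (2*i+1) \<le> lo j" using mono that by (simp add: lo_def)
    then show ?thesis unfolding F_def by auto
  qed
  have disj: "\<forall>i j. i \<noteq> j \<longrightarrow> F i \<inter> F j = {}"
  proof (intro allI impI)
    fix i j :: nat assume "i \<noteq> j"
    then have "i < j \<or> j < i" by arith
    then show "F i \<inter> F j = {}" using sep by blast
  qed
  obtain p where p: "free_uf p" and selp: "\<forall>\<sigma>. (\<forall>j. \<sigma> j \<in> F j) \<longrightarrow> img \<sigma> p \<in> X"
    using lemmaA[OF X R PC Fne disj] by blast
  have puf: "is_ultrafilter p" using p by (simp add: free_uf_def)
  define c where "c j = e (2*j)" for j
  have injc: "inj c" unfolding c_def inj_def using sm strict_mono_eq by fastforce
  define P where "P = img c p"
  have Pfree: "free_uf P" unfolding P_def by (rule img_free[OF p injc])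
  have "img (f k) P \<in> X" if k: "k \<in> K" for k
  proof -
    have eq: "img (f k) P = img (f k \<circ> c) p" unfolding P_def by (simp add: img_comp)
    have "A \<in> Dk (f k)" using Ak k .
    then have "EC (f k) A \<or> SW (f k) A" by (simp add: Dk_def)
    then show ?thesis
    proof
      assume "EC (f k) A"
      then obtain v where v: "finite {a\<in>A. f k a \<noteq> v}" unfolding EC_def by blast
      have "{j. (f k \<circ> c) j \<noteq> v} \<subseteq> c -` {a\<in>A. f k a \<noteq> v}" using eA unfolding c_def by auto
      moreover have "finite (c -` {a\<in>A. f k a \<noteq> v})" using finite_vimageI[OF v injc] .
      ultimately have "finite {j. (f k \<circ> c) j \<noteq> v}" by (rule finite_subset)
      then have "img (f k \<circ> c) p = principal_uf v" by (rule img_const[OF p])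
      then show ?thesis using eq R by auto
    next
      assume "SW (f k) A"
      then obtain N where N: "\<forall>a\<in>A. \<forall>b\<in>A. N \<le> a \<longrightarrow> a < b \<longrightarrow> f k a < b \<and> a \<le> f k b"
        unfolding SW_def by blast
      have inF: "(f k \<circ> c) j \<in> F j" if j: "N < j" for j
      proof -
        have j1: "j \<noteq> 0" using j by simp
        have "N \<le> 2*j - 1" using j by simp
        then have a1: "N \<le> e (2*j - 1)" using ge le_trans by blast
        have "2*j - 1 < 2*j" using j1 by simp
        then have "e (2*j - 1) < e (2*j)" using less by blast
        then have "e (2*j - 1) \<le> f k (e (2*j))" using N eA a1 by blast
        then have low: "lo j \<le> (f k \<circ> c) j" using j1 by (simp add: lo_def c_def)
        have "N \<le> e (2*j)" using ge[of "2*j"] j by simp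
        then have "f k (e (2*j)) < e (2*j+1)" using N eA e2 by blast
        then show ?thesis using low unfolding F_def c_def by simp
      qed
      define \<sigma> where "\<sigma> j = (if N < j then (f k \<circ> c) j else lo j)" for j
      have "\<forall>j. \<sigma> j \<in> F j" unfolding \<sigma>_def using inF loF by simp
      then have sX: "img \<sigma> p \<in> X" using selp by blast
      have "- {..N} \<in> p" using free_cofinite[OF p, of "{..N}"] by blast
      moreover have "- {..N} \<subseteq> {j. \<sigma> j = (f k \<circ> c) j}" unfolding \<sigma>_def by auto
      ultimately have "{j. \<sigma> j = (f k \<circ> c) j} \<in> p" using uf_mono[OF puf] by blast
      then have "img \<sigma> p = img (f k \<circ> c) p" by (rule img_cong[OF puf])
      then show ?thesis using sX eq by simp
    qed
  qed
  then show ?thesis using Pfree by blast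
qed




lemma uf_INT:
  assumes P: "is_ultrafilter P" and J: "finite J" and A: "\<forall>i\<in>J. A i \<in> P"
  shows "(\<Inter>i\<in>J. A i) \<in> P"
  using J A
proof (induction J rule: finite_induct)
  case empty then show ?case using uf_UNIV[OF P] by simp
next
  case (insert x F)
  then have "A x \<in> P" "(\<Inter>i\<in>F. A i) \<in> P" by auto
  then show ?case using uf_Int[OF P] by simp
qed

theorem theorem4p1:
  fixes X :: "nat set set set" and K :: "'k set"
  assumes "X \<subseteq> betaw"
    and "range principal_uf \<subseteq> X"
    and "pseudocompact (vietoris (subtopology betaw_top X))"
    and "less_than_h K"
  shows "rel_countably_compact (product_topology (\<lambda>k. subtopology betaw_top X) K)
           (PiE K (\<lambda>k. range principal_uf))
       \<and> kappa_omega_star_pseudocompact K (subtopology betaw_top X)"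
proof -
  note X = assms(1) and R = assms(2) and PC = assms(3) and LH = assms(4)
  let ?T = "subtopology betaw_top X"
  have TX: "topspace ?T = X" by (rule topspace_TX[OF X])
  have part2: "kappa_omega_star_pseudocompact K ?T"
    unfolding kappa_omega_star_pseudocompact_def
  proof (intro allI impI)
    fix U :: "'k \<Rightarrow> nat \<Rightarrow> nat set set set"
    assume H: "\<forall>k\<in>K. \<forall>n. openin ?T (U k n) \<and> U k n \<noteq> {}"
    define f where "f k n = (SOME m. principal_uf m \<in> U k n)" for k n
    have fU: "principal_uf (f k n) \<in> U k n" if "k \<in> K" for k n
    proof -
      have "openin ?T (U k n)" "U k n \<noteq> {}" using H that by blast+
      then have "\<exists>m. principal_uf m \<in> U k n" by (rule dense_open[OF X R])
      then show ?thesis unfolding f_def by (rule someI_ex)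
    qed
    obtain P where P: "free_uf P" "\<forall>k\<in>K. img (f k) P \<in> X" using key[OF X R PC LH, of f] by (elim exE conjE)
    have puf: "is_ultrafilter P" using P(1) by (simp add: free_uf_def)
    have Pom: "P \<in> omega_star" using P(1) by (simp add: omega_star_def free_uf_def betaw_def)
    have "\<exists>x. p_limit ?T P (U k) x" if k: "k \<in> K" for k
    proof -
      have "p_limit ?T P (U k) (img (f k) P)"
        unfolding p_limit_def
      proof (intro conjI allI impI)
        show "img (f k) P \<in> topspace ?T" using P(2) k TX by simp
        fix V assume V: "openin ?T V \<and> img (f k) P \<in> V"
        then have "{n. principal_uf (f k n) \<in> V} \<in> P" using limit_open[OF puf X _ _ R] by blast
        moreover have "{n. principal_uf (f k n) \<in> V} \<subseteq> {n. V \<inter> U k n \<noteq> {}}" using fU[OF k] by blast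
        ultimately show "{n. V \<inter> U k n \<noteq> {}} \<in> P" using uf_mono[OF puf] by blast
      qed
      then show ?thesis by blast
    qed
    then show "\<exists>p\<in>omega_star. \<forall>k\<in>K. \<exists>x. p_limit ?T p (U k) x" using Pom by blast
  qed
  have part1: "rel_countably_compact (product_topology (\<lambda>k. ?T) K) (PiE K (\<lambda>k. range principal_uf))"
    unfolding rel_countably_compact_def
  proof (intro conjI allI impI)
    have tp: "topspace (product_topology (\<lambda>k. ?T) K) = PiE K (\<lambda>k. X)" using TX by simp
    then show "PiE K (\<lambda>k. range principal_uf) \<subseteq> topspace (product_topology (\<lambda>k. ?T) K)"
      using R PiE_mono by metis
    fix S assume S: "S \<subseteq> PiE K (\<lambda>k. range principal_uf) \<and> infinite S \<and> countable S"
    then obtain s where s: "bij_betw s (UNIV :: nat set) S" using countable_infiniteE' by blast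
    have sS: "s n \<in> S" for n using s bij_betwE by blast
    have injs: "inj s" using s bij_betw_def by blast
    define f where "f k n = (SOME m. s n k = principal_uf m)" for k n
    have sf: "s n k = principal_uf (f k n)" if "k \<in> K" for k n
    proof -
      have "s n \<in> PiE K (\<lambda>k. range principal_uf)" using sS S by blast
      then have "s n k \<in> range principal_uf" using that by blast
      then have "\<exists>m. s n k = principal_uf m" by blast
      then show ?thesis unfolding f_def by (rule someI_ex)
    qed
    obtain P where P: "free_uf P" "\<forall>k\<in>K. img (f k) P \<in> X" using key[OF X R PC LH, of f] by (elim exE conjE)
    have puf: "is_ultrafilter P" using P(1) by (simp add: free_uf_def)
    define x where "x = (\<lambda>k. if k \<in> K then img (f k) P else undefined)"
    have xtop: "x \<in> topspace (product_topology (\<lambda>k. ?T) K)" unfolding tp x_def using P(2) by auto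
    have "x \<in> product_topology (\<lambda>k. ?T) K derived_set_of S"
      unfolding derived_set_of_def
    proof (intro CollectI conjI allI impI xtop)
      fix W assume W: "x \<in> W \<and> openin (product_topology (\<lambda>k. ?T) K) W"
      then have "openin (product_topology (\<lambda>k. ?T) K) W" by (rule conjunct2)
      then have "\<forall>x \<in> W. \<exists>U. finite {i \<in> K. U i \<noteq> topspace ?T} \<and>
                 (\<forall>i \<in> K. openin ?T (U i)) \<and> x \<in> Pi\<^sub>E K U \<and> Pi\<^sub>E K U \<subseteq> W"
        by (simp only: openin_product_topology_alt)
      moreover have "x \<in> W" using W by (rule conjunct1)
      ultimately have "\<exists>U. finite {i \<in> K. U i \<noteq> topspace ?T} \<and>
                 (\<forall>i \<in> K. openin ?T (U i)) \<and> x \<in> Pi\<^sub>E K U \<and> Pi\<^sub>E K U \<subseteq> W" by (rule bspec)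
      then obtain U where UU: "finite {i \<in> K. U i \<noteq> topspace ?T} \<and>
                 (\<forall>i \<in> K. openin ?T (U i)) \<and> x \<in> Pi\<^sub>E K U \<and> Pi\<^sub>E K U \<subseteq> W" by (rule exE)
      have U1: "finite {i \<in> K. U i \<noteq> topspace ?T}" using UU by (rule conjunct1)
      have U2: "\<forall>i\<in>K. openin ?T (U i)" using UU by simp
      have U3: "x \<in> PiE K U" using UU by simp
      have U4: "PiE K U \<subseteq> W" using UU by simp
      note U = U1 U2 U3 U4
      define J where "J = {i \<in> K. U i \<noteq> topspace ?T}"
      have inP: "{n. principal_uf (f i n) \<in> U i} \<in> P" if i: "i \<in> K" for i
      proof -
        have "x i \<in> U i" using PiE_mem[OF U(3) i] .
        then have "img (f i) P \<in> U i" using i unfolding x_def by simp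
        moreover have "openin ?T (U i)" using U(2) i by blast
        ultimately show ?thesis using limit_open[OF puf X _ _ R] by blast
      qed
      define Q where "Q = (\<Inter>i\<in>J. {n. principal_uf (f i n) \<in> U i})"
      have "\<forall>i\<in>J. {n. principal_uf (f i n) \<in> U i} \<in> P" using inP unfolding J_def by blast
      moreover have "finite J" using U(1) unfolding J_def .
      ultimately have QP: "Q \<in> P" unfolding Q_def by (intro uf_INT[OF puf])
      have QW: "s n \<in> W" if n: "n \<in> Q" for n
      proof -
        have snP: "s n \<in> PiE K (\<lambda>k. range principal_uf)" using sS S by blast
        have "s n \<in> PiE K U"
        proof (rule PiE_I)
          fix i assume i: "i \<in> K"
          show "s n i \<in> U i"
          proof (cases "i \<in> J")
            case True
            then have "principal_uf (f i n) \<in> U i" using n unfolding Q_def by blast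
            then show ?thesis using sf[OF i] by simp
          next
            case False
            then have "U i = X" using i TX unfolding J_def by simp
            moreover have "s n i \<in> range principal_uf" using snP i by blast
            ultimately show ?thesis using R by blast
          qed
        next
          fix i assume "i \<notin> K" then show "s n i = undefined" using snP by (simp add: PiE_def extensional_def)
        qed
        then show ?thesis using U(4) by blast
      qed
      have "infinite Q" using free_infinite[OF P(1) QP] .
      moreover have "finite {n. s n = x}"
      proof -
        have "{n. s n = x} \<subseteq> s -` {x}" by blast
        then show ?thesis using finite_vimageI[OF _ injs, of "{x}"] finite_subset by blast
      qed
      ultimately have "infinite (Q - {n. s n = x})" by (rule Diff_infinite_finite[rotated])
      then obtain n where n: "n \<in> Q" "s n \<noteq> x" using infinite_imp_nonempty by blast
      show "\<exists>y. y \<noteq> x \<and> y \<in> S \<and> y \<in> W" using n QW sS by blast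
    qed
    then show "product_topology (\<lambda>k. ?T) K derived_set_of S \<noteq> {}" by blast
  qed
  show ?thesis using part1 part2 by blast
qed


end
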